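(* Let $K\subset\mathbb{R}^d$ be a non-empty compact set, let $\rho\in(0,1)$, let $\mathcal{B}$ be an inner regular partition of $K$ with ratio $\rho$, and let $\mathcal{T}$ be the corresponding tree. Then $\dim_{\mathrm{L}}\partial\mathcal{T}\leq\dim_{\mathrm{L}} K$.
   Context: $B(x,r)$ is the closed ball; $N_r(F)$ is the minimal number of closed $r$-balls centred in $F$ covering $F$; $\dim_{\mathrm{L}} K=\sup\{s>0:\exists C>0\ \forall 0<r\leq R<1\ \forall x\in K,\ N_r(B(x,R)\cap K)\geq C(R/r)^s\}$. Inner regular partition: for $\rho\in(0,1)$, a family $\mathcal{B}=\{(Q_{i,k},x_{i,k}):k\in\mathbb{N}\cup\{0\},\ i\in\mathcal{N}_k\}$ of non-empty Borel sets $Q_{i,k}$ with distinguished points $x_{i,k}\in K\cap Q_{i,k}$ such that, for some constants $c,C>0$: (i) $\#\mathcal{N}_0=1$; (ii) for each $k$, $K$ is the disjoint union of $Q_{i,k}$, $i\in\mathcal{N}_k$; (iii) if $k\leq m$, $i\in\mathcal{N}_k$, $j\in\mathcal{N}_m$ then either $Q_{i,k}\cap Q_{j,m}=\varnothing$ or $Q_{j,m}\subset Q_{i,k}$; (iv) $B(x_{i,k},c\rho^k)\subset Q_{i,k}\subset B(x_{i,k},C\rho^k)$ for all $k,i$; (v) $\{x_{i,k}:i\in\mathcal{N}_k\}\subset\{x_{i,k+1}:i\in\mathcal{N}_{k+1}\}$. The number of children (sets of level $k+1$ contained in a given set of level $k$) is bounded by some $M\in\mathbb{N}$. Corresponding tree: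 with alphabet $\mathcal{A}=\{1,\ldots,M\}$, label the root set of level $0$ by the empty word, and inductively, if the set with label $\mathtt{a}\in\mathcal{A}^k$ has children $R_1,\ldots,R_j$ ($j\leq M$), label $R_i$ by $\mathtt{a}i$. $\mathcal{T}$ is the set of all labels, $\mathcal{T}_n$ the labels of length $n$. For a word $\mathtt{a}$ of length $n$, $[\mathtt{a}]$ is the set of infinite sequences in $\mathcal{A}^{\mathbb{N}}$ beginning with $\mathtt{a}$, and $\partial\mathcal{T}=\bigcap_n\bigcup_{\mathtt{a}\in\mathcal{T}_n}[\mathtt{a}]$. The lower dimension of $\partial\mathcal{T}$ is defined as $\dim_{\mathrm{L}}\partial\mathcal{T}=\sup\{s>0:\exists C>0\ \forall 0\leq m\leq k\ \forall\mathtt{a}\in\mathcal{T}_m,\ \#\{\mathtt{b}\in\mathcal{T}_k:[\mathtt{b}]\subset[\mathtt{a}]\}\geq C\rho^{(m-k)s}\}$. *)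

theory Defs
  imports "HOL-Analysis.Analysis"
begin

definition covnum :: "real \<Rightarrow> 'a::metric_space set \<Rightarrow> nat" where
  "covnum r F = Inf {card S | S. finite S \<and> S \<subseteq> F \<and> F \<subseteq> (\<Union>y\<in>S. cball y r)}"

text \<open>Lower dimension of K (convention: supremum of the empty set is 0).\<close>
definition lower_dim :: "'a::metric_space set \<Rightarrow> real" where
  "lower_dim K = Sup (insert 0 {s. s > 0 \<and> (\<exists>C>0. \<forall>r R. 0 < r \<and> r \<le> R \<and> R < 1 \<longrightarrow>
       (\<forall>x\<in>K. real (covnum r (cball x R \<inter> K)) \<ge> C * (R / r) powr s))})"

definition inner_regular_partition ::
  "'a::euclidean_space set \<Rightarrow> real \<Rightarrow> (nat \<Rightarrow> 'i set) \<Rightarrow> (nat \<Rightarrow> 'i \<Rightarrow> 'a set)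
     \<Rightarrow> (nat \<Rightarrow> 'i \<Rightarrow> 'a) \<Rightarrow> bool" where
  "inner_regular_partition K \<rho> N Q x \<longleftrightarrow>
     (\<forall>k. \<forall>i\<in>N k. Q k i \<noteq> {} \<and> Q k i \<in> sets borel \<and> x k i \<in> K \<inter> Q k i) \<and>
     card (N 0) = 1 \<and>
     (\<forall>k. (\<Union>i\<in>N k. Q k i) = K \<and> (\<forall>i\<in>N k. \<forall>j\<in>N k. i \<noteq> j \<longrightarrow> Q k i \<inter> Q k j = {})) \<and>
     (\<forall>k m. k \<le> m \<longrightarrow> (\<forall>i\<in>N k. \<forall>j\<in>N m. Q k i \<inter> Q m j = {} \<or> Q m j \<subseteq> Q k i)) \<and>
     (\<exists>c>0. \<exists>C>0. \<forall>k. \<forall>i\<in>N k.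
         cball (x k i) (c * \<rho> ^ k) \<inter> K \<subseteq> Q k i \<and> Q k i \<subseteq> cball (x k i) (C * \<rho> ^ k)) \<and>
     (\<forall>k. x k ` N k \<subseteq> x (Suc k) ` N (Suc k))"

definition children :: "(nat \<Rightarrow> 'i set) \<Rightarrow> (nat \<Rightarrow> 'i \<Rightarrow> 'a set) \<Rightarrow> nat \<Rightarrow> 'i \<Rightarrow> 'i set" where
  "children N Q k i = {j \<in> N (Suc k). Q (Suc k) j \<subseteq> Q k i}"

text \<open>T (set of words over positive naturals) with labelling lab (word of length k
  \<mapsto> index of a level-k set) is a tree corresponding to the partition: the root is the
  empty word, and the children of the set labelled a are labelled a@[1],...,a@[j].\<close>
definition corresponding_tree ::
  "(nat \<Rightarrow> 'i set) \<Rightarrow> (nat \<Rightarrow> 'i \<Rightarrow> 'a set) \<Rightarrow> nat list set \<Rightarrow> (nat list \<Rightarrow> 'i) \<Rightarrow> bool" where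
  "corresponding_tree N Q T lab \<longleftrightarrow>
     [] \<in> T \<and> lab [] \<in> N 0 \<and>
     (\<forall>w\<in>T. w \<noteq> [] \<longrightarrow> butlast w \<in> T) \<and>
     (\<forall>a\<in>T. {n. a @ [n] \<in> T} = {1..card (children N Q (length a) (lab a))} \<and>
        bij_betw (\<lambda>n. lab (a @ [n])) {1..card (children N Q (length a) (lab a))}
                 (children N Q (length a) (lab a)))"

definition cyl :: "nat list \<Rightarrow> (nat \<Rightarrow> nat) set" where
  "cyl a = {\<omega>. \<forall>i<length a. \<omega> i = a ! i}"

definition tree_boundary :: "nat list set \<Rightarrow> (nat \<Rightarrow> nat) set" where
  "tree_boundary T = (\<Inter>n. \<Union>a\<in>{a\<in>T. length a = n}. cyl a)"

text \<open>Lower dimension of the boundary of T w.r.t. ratio rho (sup of empty set is 0).\<close>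
definition lower_dim_tree :: "real \<Rightarrow> nat list set \<Rightarrow> real" where
  "lower_dim_tree \<rho> T = Sup (insert 0 {s. s > 0 \<and> (\<exists>C>0. \<forall>m k. m \<le> k \<longrightarrow>
       (\<forall>a\<in>T. length a = m \<longrightarrow>
          real (card {b\<in>T. length b = k \<and> cyl b \<subseteq> cyl a}) \<ge> C * \<rho> powr ((real m - real k) * s)))})"

end

theory Submission
  imports Defs
begin


lemma packing:
  fixes S :: "'a::euclidean_space set"
  assumes fin: "finite S" and sub: "S \<subseteq> cball y R" and sep: "\<And>p q. p\<in>S \<Longrightarrow> q\<in>S \<Longrightarrow> p\<noteq>q \<Longrightarrow> dist p q \<ge> \<delta>"
    and d: "\<delta> > 0" and R0: "R \<ge> 0"
  shows "real (card S) * (\<delta>/2)^DIM('a) \<le> (R + \<delta>/2)^DIM('a)"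
proof (cases "S = {}")
  case True then show ?thesis using d R0 by simp
next
  case False
  have disj: "disjoint_family_on (\<lambda>p. ball p (\<delta>/2)) S"
  unfolding disjoint_family_on_def proof (intro ballI impI, rule ccontr)
    fix p q assume pq: "p \<in> S" "q \<in> S" "p \<noteq> q" "ball p (\<delta>/2) \<inter> ball q (\<delta>/2) \<noteq> {}"
    then obtain z where "dist p z < \<delta>/2" "dist q z < \<delta>/2" by auto
    then have "dist p q < \<delta>" by (metis dist_commute dist_triangle_less_add field_sum_of_halves)
    with sep[OF pq(1-3)] show False by simp
  qed
  have "measure lborel (\<Union>p\<in>S. ball p (\<delta>/2)) = (\<Sum>p\<in>S. measure lborel (ball p (\<delta>/2)))"
    by (rule measure_finite_Union) (use fin disj d in \<open>auto simp: emeasure_ball\<close>)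
  also have "\<dots> = real (card S) * (unit_ball_vol (DIM('a)) * (\<delta>/2)^DIM('a))"
    using d by (simp add: content_ball)
  finally have eq: "measure lborel (\<Union>p\<in>S. ball p (\<delta>/2)) = real (card S) * (unit_ball_vol (DIM('a)) * (\<delta>/2)^DIM('a))" .
  have "(\<Union>p\<in>S. ball p (\<delta>/2)) \<subseteq> ball y (R + \<delta>/2)"
  proof
    fix z assume "z \<in> (\<Union>p\<in>S. ball p (\<delta>/2))"
    then obtain p where "p \<in> S" "dist p z < \<delta>/2" by auto
    moreover have "dist y p \<le> R" using sub \<open>p \<in> S\<close> by auto
    ultimately show "z \<in> ball y (R + \<delta>/2)" by (smt (verit) dist_triangle mem_ball)
  qed
  then have "measure lborel (\<Union>p\<in>S. ball p (\<delta>/2)) \<le> measure lborel (ball y (R + \<delta>/2))"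
    using R0 d by (intro measure_mono_fmeasurable) (auto intro!: fmeasurableI borel_open simp: emeasure_ball)
  also have "\<dots> = unit_ball_vol (DIM('a)) * (R + \<delta>/2)^DIM('a)"
    using R0 d by (simp add: content_ball)
  finally have "real (card S) * (\<delta>/2)^DIM('a) * unit_ball_vol (DIM('a)) \<le> (R + \<delta>/2)^DIM('a) * unit_ball_vol (DIM('a))"
    using eq by (simp add: algebra_simps)
  then show ?thesis by (simp add: mult_le_cancel_right)
qed




lemma covnum_upper:
  fixes F :: "'a::euclidean_space set"
  assumes FR: "F \<subseteq> cball y R" and r: "r > 0" and R0: "R \<ge> 0"
  shows "real (covnum r F) * (r/2)^DIM('a) \<le> (R + r/2)^DIM('a)"
proof -
  define P where "P = (\<lambda>S. finite S \<and> S \<subseteq> F \<and> (\<forall>p\<in>S. \<forall>q\<in>S. p \<noteq> q \<longrightarrow> dist p q > r))"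
  define B where "B = (R + r/2)^DIM('a) / (r/2)^DIM('a)"
  have bnd: "real (card S) * (r/2)^DIM('a) \<le> (R + r/2)^DIM('a)" if "P S" for S
    using that FR r R0 unfolding P_def by (intro packing[where y=y]) (auto intro: less_imp_le)
  have bnd2: "card S < nat (ceiling B) + 1" if "P S" for S
  proof -
    have "real (card S) \<le> B" using bnd[OF that] r unfolding B_def by (simp add: field_simps)
    then show ?thesis by linarith
  qed
  have "P {}" unfolding P_def by simp
  from Lattices_Big.ex_has_greatest_nat[of P "{}" card, OF this] bnd2
  obtain S where S: "P S" and Smax: "\<And>S'. P S' \<Longrightarrow> card S' \<le> card S" by blast
  have cover: "F \<subseteq> (\<Union>p\<in>S. cball p r)"
  proof
    fix z assume z: "z \<in> F"
    show "z \<in> (\<Union>p\<in>S. cball p r)"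
    proof (rule ccontr)
      assume "z \<notin> (\<Union>p\<in>S. cball p r)"
      then have far: "\<forall>p\<in>S. dist p z > r" by auto
      then have zS: "z \<notin> S" using r by auto
      have "P (insert z S)" using S z far unfolding P_def by (auto simp: dist_commute)
      from Smax[OF this] zS S show False unfolding P_def by simp
    qed
  qed
  have "covnum r F \<le> card S" unfolding covnum_def
    by (rule cInf_lower) (use S cover in \<open>auto simp: P_def\<close>)
  then have "real (covnum r F) * (r/2)^DIM('a) \<le> real (card S) * (r/2)^DIM('a)"
    using r by (intro mult_right_mono) auto
  also have "\<dots> \<le> (R + r/2)^DIM('a)" by (rule bnd[OF S])
  finally show ?thesis .
qed

lemma KS_bounded:
  fixes K :: "'a::euclidean_space set"
  assumes "K \<noteq> {}" and s: "s > 0" and C: "C > 0"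
    and H: "\<forall>r R. 0 < r \<and> r \<le> R \<and> R < 1 \<longrightarrow>
       (\<forall>x\<in>K. real (covnum r (cball x R \<inter> K)) \<ge> C * (R / r) powr s)"
  shows "s \<le> real DIM('a)"
proof (rule ccontr)
  assume "\<not> s \<le> real DIM('a)"
  then have e: "real DIM('a) - s < 0" by simp
  obtain x0 where x0: "x0 \<in> K" using assms(1) by auto
  have key: "C / 4^DIM('a) \<le> real n powr (real DIM('a) - s)" if n: "n \<ge> 1" for n :: nat
  proof -
    define r where "r = 1 / (2 * real n)"
    have r: "r > 0" "r \<le> 1/2" using n by (auto simp: r_def field_simps)
    have Rr: "(1/2) / r = real n" using n by (simp add: r_def)
    have "C * real n powr s \<le> real (covnum r (cball x0 (1/2) \<inter> K))"
      using H[rule_format, of r "1/2" x0] r x0 Rr by simp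
    also have "\<dots> * (r/2)^DIM('a) \<le> (1/2 + r/2)^DIM('a)"
      by (rule covnum_upper) (use r in auto)
    finally have "C * real n powr s * (r/2)^DIM('a) \<le> (1/2 + r/2)^DIM('a)"
      using r by (simp add: mult_right_mono)
    then have "C * real n powr s * ((r/2)^DIM('a) * (2 * real n)^DIM('a)) \<le> (1/2 + r/2)^DIM('a) * (2 * real n)^DIM('a)"
      using n by (simp add: mult_right_mono mult.assoc)
    also have "(1/2 + r/2)^DIM('a) * (2 * real n)^DIM('a) = (real n + 1/2)^DIM('a)"
    proof -
      have "(1/2 + r/2) * (2 * real n) = real n + 1/2" using n by (simp add: r_def field_simps)
      then show ?thesis by (metis power_mult_distrib)
    qed
    also have "\<dots> \<le> (2 * real n)^DIM('a)"
      using n by (intro power_mono) auto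
    also have "(r/2)^DIM('a) * (2 * real n)^DIM('a) = (1/2)^DIM('a)"
    proof -
      have "(r/2) * (2 * real n) = 1/2" using n by (simp add: r_def field_simps)
      then show ?thesis by (metis power_mult_distrib)
    qed
    finally have "C * real n powr s * (1/2)^DIM('a) \<le> 2^DIM('a) * real n ^ DIM('a)"
      by (simp add: power_mult_distrib)
    then have "C * real n powr s * (1/2)^DIM('a) * 2^DIM('a) \<le> 2^DIM('a) * real n ^ DIM('a) * 2^DIM('a)"
      by (intro mult_right_mono) auto
    moreover have "(1/2::real)^DIM('a) * 2^DIM('a) = 1" by (simp add: power_one_over)
    moreover have "(2::real)^DIM('a) * 2^DIM('a) = 4^DIM('a)" by (simp flip: power_mult_distrib)
    ultimately have h: "C * real n powr s \<le> 4^DIM('a) * real n ^ DIM('a)"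
      by (simp only: mult.assoc) (simp add: ac_simps)
    have ps: "real n powr s > 0" using n by simp
    have "C / 4^DIM('a) \<le> real n ^ DIM('a) / real n powr s"
      using h ps by (simp add: divide_le_eq le_divide_eq mult.commute)
    also have "\<dots> = real n powr (real DIM('a) - s)"
    proof -
      have "real n ^ DIM('a) = real n powr real DIM('a)" using n by (simp add: powr_realpow)
      then show ?thesis by (simp only: powr_diff)
    qed
    finally show ?thesis .
  qed
  have "((\<lambda>n. real n powr (real DIM('a) - s)) \<longlongrightarrow> 0) sequentially"
    by (rule tendsto_neg_powr[OF e filterlim_real_sequentially])
  then have "eventually (\<lambda>n. real n powr (real DIM('a) - s) < C / 4^DIM('a)) sequentially"
    using C by (intro order_tendstoD(2)) auto
  then obtain N where N: "\<And>n. n \<ge> N \<Longrightarrow> real n powr (real DIM('a) - s) < C / 4^DIM('a)"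
    unfolding eventually_sequentially by blast
  have "real (max N 1) powr (real DIM('a) - s) < C / 4^DIM('a)" by (rule N) simp
  moreover have "C / 4^DIM('a) \<le> real (max N 1) powr (real DIM('a) - s)" by (rule key) simp
  ultimately show False by simp
qed




locale irp =
  fixes K :: "'a::euclidean_space set" and \<rho> :: real
    and N :: "nat \<Rightarrow> 'i set" and Q :: "nat \<Rightarrow> 'i \<Rightarrow> 'a set" and x :: "nat \<Rightarrow> 'i \<Rightarrow> 'a"
    and T :: "nat list set" and lab :: "nat list \<Rightarrow> 'i"
  assumes IRP: "inner_regular_partition K \<rho> N Q x"
    and CT: "corresponding_tree N Q T lab"
begin

lemma P1: "i \<in> N k \<Longrightarrow> Q k i \<noteq> {} \<and> x k i \<in> K \<and> x k i \<in> Q k i"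
  using IRP[unfolded inner_regular_partition_def, THEN conjunct1] by blast
lemma P2: "card (N 0) = 1"
  using IRP[unfolded inner_regular_partition_def, THEN conjunct2, THEN conjunct1] by blast
lemma P3: "(\<Union>i\<in>N k. Q k i) = K \<and> (\<forall>i\<in>N k. \<forall>j\<in>N k. i \<noteq> j \<longrightarrow> Q k i \<inter> Q k j = {})"
  using IRP[unfolded inner_regular_partition_def, THEN conjunct2, THEN conjunct2, THEN conjunct1] by blast
lemma P3a: "(\<Union>i\<in>N k. Q k i) = K"
  using P3 by blast
lemma P3b: "i \<in> N k \<Longrightarrow> j \<in> N k \<Longrightarrow> i \<noteq> j \<Longrightarrow> Q k i \<inter> Q k j = {}"
  using P3 by blast
lemma P4: "k \<le> m \<Longrightarrow> i \<in> N k \<Longrightarrow> j \<in> N m \<Longrightarrow> Q k i \<inter> Q m j = {} \<or> Q m j \<subseteq> Q k i"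
  using IRP[unfolded inner_regular_partition_def, THEN conjunct2, THEN conjunct2, THEN conjunct2, THEN conjunct1] by blast
lemma P5: "\<exists>c>0. \<exists>C>0. \<forall>k. \<forall>i\<in>N k.
         cball (x k i) (c * \<rho> ^ k) \<inter> K \<subseteq> Q k i \<and> Q k i \<subseteq> cball (x k i) (C * \<rho> ^ k)"
  using IRP[unfolded inner_regular_partition_def, THEN conjunct2, THEN conjunct2, THEN conjunct2, THEN conjunct2, THEN conjunct1] by blast

lemma QK: "i \<in> N k \<Longrightarrow> Q k i \<subseteq> K"
  using P3a[of k] by blast

lemma T1: "[] \<in> T" "lab [] \<in> N 0"
  using CT unfolding corresponding_tree_def by blast+
lemma T2: "w \<in> T \<Longrightarrow> w \<noteq> [] \<Longrightarrow> butlast w \<in> T"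
  using CT unfolding corresponding_tree_def by blast
lemma T3a: "a \<in> T \<Longrightarrow> {n. a @ [n] \<in> T} = {1..card (children N Q (length a) (lab a))}"
  using CT unfolding corresponding_tree_def by blast
lemma T3b: "a \<in> T \<Longrightarrow> bij_betw (\<lambda>n. lab (a @ [n])) {1..card (children N Q (length a) (lab a))}
                 (children N Q (length a) (lab a))"
  using CT unfolding corresponding_tree_def by blast

lemma snoc_child: assumes "a @ [n] \<in> T"
  shows "a \<in> T" "lab (a @ [n]) \<in> children N Q (length a) (lab a)"
proof -
  show aT: "a \<in> T" using T2[OF assms] by simp
  have "n \<in> {1..card (children N Q (length a) (lab a))}" using T3a[OF aT] assms by blast
  then show "lab (a @ [n]) \<in> children N Q (length a) (lab a)"
    using T3b[OF aT] by (auto simp: bij_betw_def)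
qed

lemma lab_N: "w \<in> T \<Longrightarrow> lab w \<in> N (length w)"
proof (induction w rule: rev_induct)
  case Nil then show ?case using T1 by simp
next
  case (snoc n a)
  then show ?case using snoc_child[OF snoc.prems] by (auto simp: children_def)
qed

lemma prefix_nest: "w \<in> T \<Longrightarrow> m \<le> length w \<Longrightarrow> take m w \<in> T \<and> Q (length w) (lab w) \<subseteq> Q m (lab (take m w))"
proof (induction w rule: rev_induct)
  case Nil then show ?case by simp
next
  case (snoc n a)
  note sc = snoc_child[OF snoc.prems(1)]
  show ?case
  proof (cases "m = length (a @ [n])")
    case True then show ?thesis using snoc.prems by simp
  next
    case False
    then have m: "m \<le> length a" using snoc.prems by simp
    then have IH: "take m a \<in> T \<and> Q (length a) (lab a) \<subseteq> Q m (lab (take m a))" using snoc.IH sc by blast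
    have "Q (Suc (length a)) (lab (a @ [n])) \<subseteq> Q (length a) (lab a)" using sc(2) by (simp add: children_def)
    then show ?thesis using IH m by auto
  qed
qed

lemma lab_inj: "a \<in> T \<Longrightarrow> b \<in> T \<Longrightarrow> length a = length b \<Longrightarrow> lab a = lab b \<Longrightarrow> a = b"
proof (induction a arbitrary: b rule: rev_induct)
  case Nil then show ?case by simp
next
  case (snoc p a)
  obtain b' q where b: "b = b' @ [q]" using snoc.prems(3)
    by (metis append_butlast_last_id length_0_conv snoc_eq_iff_butlast)
  note sa = snoc_child[OF snoc.prems(1)]
  note sb = snoc_child[OF snoc.prems(2)[unfolded b]]
  have len: "length a = length b'" using snoc.prems(3) b by simp
  have same: "lab a = lab b'"
  proof (rule ccontr)
    assume ne: "lab a \<noteq> lab b'"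
    have "Q (Suc (length a)) (lab (a @ [p])) \<subseteq> Q (length a) (lab a) \<inter> Q (length a) (lab b')"
      using sa(2) sb(2) len snoc.prems(4) b by (auto simp: children_def)
    moreover have "Q (Suc (length a)) (lab (a @ [p])) \<noteq> {}"
      using P1 sa(2) by (auto simp: children_def)
    moreover have "Q (length a) (lab a) \<inter> Q (length a) (lab b') = {}"
      using P3b[OF lab_N[OF sa(1)] _ ne] lab_N[OF sb(1)] len by simp
    ultimately show False by blast
  qed
  then have ab: "a = b'" using snoc.IH[OF sa(1) sb(1) len] by simp
  have "p \<in> {1..card (children N Q (length a) (lab a))}" using T3a[OF sa(1)] snoc.prems(1) by blast
  moreover have "q \<in> {1..card (children N Q (length a) (lab a))}" using T3a[OF sa(1)] snoc.prems(2) b ab by blast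
  ultimately have "p = q" using inj_onD[OF bij_betw_imp_inj_on[OF T3b[OF sa(1)]]] snoc.prems(4) b ab by simp
  then show ?case using ab b by simp
qed

lemma lab_surj: "i \<in> N k \<Longrightarrow> \<exists>a\<in>T. length a = k \<and> lab a = i"
proof (induction k arbitrary: i)
  case 0
  then have "N 0 = {lab []}" using P2 T1 by (metis card_1_singletonE singletonD)
  then show ?case using 0 T1 by auto
next
  case (Suc k)
  obtain z where z: "z \<in> Q (Suc k) i" using P1[OF Suc.prems] by blast
  then have "z \<in> K" using QK[OF Suc.prems] by blast
  then obtain i' where i': "i' \<in> N k" "z \<in> Q k i'" using P3a[of k] by blast
  have sub: "Q (Suc k) i \<subseteq> Q k i'" using P4[of k "Suc k", OF _ i'(1) Suc.prems] z i' by auto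
  obtain a where a: "a \<in> T" "length a = k" "lab a = i'" using Suc.IH[OF i'(1)] by blast
  have "i \<in> children N Q (length a) (lab a)" using sub Suc.prems a by (simp add: children_def)
  then have "i \<in> (\<lambda>n. lab (a @ [n])) ` {1..card (children N Q (length a) (lab a))}"
    using bij_betw_imp_surj_on[OF T3b[OF a(1)]] by simp
  then obtain n where n: "n \<in> {1..card (children N Q (length a) (lab a))}" "lab (a @ [n]) = i"
    by blast
  have "a @ [n] \<in> T" using T3a[OF a(1)] n(1) by blast
  then show ?case using n a by (intro bexI[of _ "a @ [n]"]) auto
qed

end



lemma covnum_lower:
  fixes F :: "'a::metric_space set"
  assumes cF: "compact F" and r: "r > 0" and fP: "finite P" and PF: "P \<subseteq> F"
    and sep: "\<And>p q. p\<in>P \<Longrightarrow> q\<in>P \<Longrightarrow> p\<noteq>q \<Longrightarrow> dist p q > 2*r"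
  shows "card P \<le> covnum r F"
proof -
  define A where "A = {card S | S. finite S \<and> S \<subseteq> F \<and> F \<subseteq> (\<Union>y\<in>S. cball y r)}"
  have cov: "F \<subseteq> (\<Union>y\<in>F. ball y r)" using r by auto
  obtain S where S: "S \<subseteq> F" "finite S" "F \<subseteq> (\<Union>y\<in>S. ball y r)"
  proof (rule compactE_image[OF cF, of F "\<lambda>y. ball y r"])
    show "\<And>T. T \<in> F \<Longrightarrow> open (ball T r)" by simp
    show "F \<subseteq> (\<Union>y\<in>F. ball y r)" by (rule cov)
  qed
  have "(\<Union>y\<in>S. ball y r) \<subseteq> (\<Union>y\<in>S. cball y r)" by (intro UN_mono) auto
  then have "F \<subseteq> (\<Union>y\<in>S. cball y r)" using S(3) by (rule order_trans[rotated])
  then have "card S \<in> A" unfolding A_def using S(1,2) by (intro CollectI exI[of _ S]) simp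
  then have "A \<noteq> {}" by blast
  then have "covnum r F \<in> A" unfolding covnum_def A_def[symmetric] by (rule Inf_nat_def1)
  then obtain S' where S': "covnum r F = card S'" "finite S'" "S' \<subseteq> F" "F \<subseteq> (\<Union>y\<in>S'. cball y r)"
    unfolding A_def by blast
  define f where "f = (\<lambda>p. SOME y. y \<in> S' \<and> dist y p \<le> r)"
  have f: "f p \<in> S' \<and> dist (f p) p \<le> r" if "p \<in> P" for p
  proof -
    have "p \<in> (\<Union>y\<in>S'. cball y r)" using that PF S'(4) by blast
    then have "\<exists>y. y \<in> S' \<and> dist y p \<le> r" by auto
    then show ?thesis unfolding f_def by (rule someI_ex)
  qed
  have "inj_on f P"
  proof (rule inj_onI, rule ccontr)
    fix p q assume pq: "p \<in> P" "q \<in> P" "f p = f q" "p \<noteq> q"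
    have "dist p q \<le> dist (f p) p + dist (f q) q" using pq(3) by (metis dist_commute dist_triangle)
    also have "\<dots> \<le> 2 * r" using f[OF pq(1)] f[OF pq(2)] by simp
    finally show False using sep[OF pq(1,2,4)] by simp
  qed
  moreover have "f ` P \<subseteq> S'" using f by auto
  ultimately have "card P \<le> card S'" using S'(2) by (intro card_inj_on_le)
  then show ?thesis using S'(1) by simp
qed

lemma cyl_prefix:
  assumes "length a \<le> length b" "cyl b \<subseteq> cyl a"
  shows "take (length a) b = a"
proof -
  define \<omega> where "\<omega> = (\<lambda>i. if i < length b then b ! i else 0)"
  have "\<omega> \<in> cyl b" unfolding cyl_def \<omega>_def by simp
  then have "\<omega> \<in> cyl a" using assms(2) by blast
  then have "\<forall>i<length a. b ! i = a ! i" using assms(1) unfolding cyl_def \<omega>_def by auto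
  then show ?thesis using assms(1) by (intro nth_equalityI) auto
qed

context irp
begin

lemma count_bound:
  assumes c: "\<forall>k. \<forall>i\<in>N k. cball (x k i) (c * \<rho> ^ k) \<inter> K \<subseteq> Q k i"
    and aT: "a \<in> T" and m: "length a = m" "m \<le> k" and QF: "Q m (lab a) \<subseteq> F"
    and cF: "compact F" and r: "r > 0" and rk: "2 * r \<le> c * \<rho> ^ k"
    and fin: "finite {b\<in>T. length b = k \<and> cyl b \<subseteq> cyl a}"
  shows "card {b\<in>T. length b = k \<and> cyl b \<subseteq> cyl a} \<le> covnum r F"
proof -
  define B where "B = {b\<in>T. length b = k \<and> cyl b \<subseteq> cyl a}"
  define g where "g = (\<lambda>b. x k (lab b))"
  have labB: "lab b \<in> N k" if "b \<in> B" for b using lab_N that unfolding B_def by auto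
  have inj: "inj_on g B"
  proof (rule inj_onI)
    fix b1 b2 assume b: "b1 \<in> B" "b2 \<in> B" "g b1 = g b2"
    have "lab b1 = lab b2"
    proof (rule ccontr)
      assume "lab b1 \<noteq> lab b2"
      then have "Q k (lab b1) \<inter> Q k (lab b2) = {}" using P3b labB b by blast
      moreover have "g b1 \<in> Q k (lab b1)" "g b2 \<in> Q k (lab b2)" using P1 labB b unfolding g_def by blast+
      ultimately show False using b(3) by auto
    qed
    then show "b1 = b2" using lab_inj b unfolding B_def by auto
  qed
  have "card B = card (g ` B)" using inj by (simp add: card_image)
  also have "\<dots> \<le> covnum r F"
  proof (rule covnum_lower[OF cF r])
    show "finite (g ` B)" using fin unfolding B_def by simp
    show "g ` B \<subseteq> F"
    proof
      fix p assume "p \<in> g ` B"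
      then obtain b where b: "b \<in> B" "p = g b" by blast
      have bT: "b \<in> T" and lb: "length b = k" and cb: "cyl b \<subseteq> cyl a" using b unfolding B_def by auto
      have tk: "take m b = a" using cyl_prefix[of a b] cb m lb by simp
      have "p \<in> Q k (lab b)" using P1 labB[OF b(1)] b(2) unfolding g_def by blast
      also have "\<dots> \<subseteq> Q m (lab (take m b))" using prefix_nest[OF bT] m lb by auto
      finally show "p \<in> F" using tk QF by auto
    qed
    fix p q assume pq: "p \<in> g ` B" "q \<in> g ` B" "p \<noteq> q"
    then obtain b1 b2 where b: "b1 \<in> B" "b2 \<in> B" "p = x k (lab b1)" "q = x k (lab b2)" unfolding g_def by blast
    then have ne: "lab b1 \<noteq> lab b2" using pq(3) by auto
    have "dist p q > c * \<rho> ^ k"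
    proof (rule ccontr)
      assume "\<not> dist p q > c * \<rho> ^ k"
      then have "q \<in> cball p (c * \<rho> ^ k) \<inter> K" using P1 labB b by auto
      then have "q \<in> Q k (lab b1)" using c labB b by blast
      moreover have "q \<in> Q k (lab b2)" using P1 labB b by blast
      ultimately show False using P3b[OF labB[OF b(1)] labB[OF b(2)] ne] by blast
    qed
    then show "dist p q > 2 * r" using rk by simp
  qed
  finally show ?thesis unfolding B_def .
qed

end



context irp
begin

lemma tree_to_K:
  assumes cK: "compact K" and r0: "0 < \<rho>" and r1: "\<rho> < 1"
    and s: "s > 0" and Ct: "Ct > 0"
    and H: "\<forall>m k. m \<le> k \<longrightarrow> (\<forall>a\<in>T. length a = m \<longrightarrow>
          real (card {b\<in>T. length b = k \<and> cyl b \<subseteq> cyl a}) \<ge> Ct * \<rho> powr ((real m - real k) * s))"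
  shows "\<exists>C>0. \<forall>r R. 0 < r \<and> r \<le> R \<and> R < 1 \<longrightarrow>
       (\<forall>x\<in>K. real (covnum r (cball x R \<inter> K)) \<ge> C * (R / r) powr s)"
proof -
  obtain c D where c: "c > 0" and D: "D > 0"
    and cD: "\<forall>k. \<forall>i\<in>N k. cball (x k i) (c * \<rho> ^ k) \<inter> K \<subseteq> Q k i \<and> Q k i \<subseteq> cball (x k i) (D * \<rho> ^ k)"
    using P5 by blast
  have cb: "\<forall>k. \<forall>i\<in>N k. cball (x k i) (c * \<rho> ^ k) \<inter> K \<subseteq> Q k i" using cD by blast
  define \<alpha> where "\<alpha> = \<rho> * min 1 (1 / (2 * D))"
  have \<alpha>0: "\<alpha> > 0" using r0 D by (simp add: \<alpha>_def)
  have \<alpha>1: "\<alpha> \<le> \<rho>" using r0 by (simp add: \<alpha>_def mult_left_le)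
  define \<gamma> where "\<gamma> = c * \<alpha> * \<rho> / 2"
  have \<gamma>0: "\<gamma> > 0" using c \<alpha>0 r0 by (simp add: \<gamma>_def)
  define C0 where "C0 = min Ct 1 * \<gamma> powr s"
  have C00: "C0 > 0" using Ct \<gamma>0 by (simp add: C0_def)
  show ?thesis
  proof (intro exI[of _ C0] conjI C00 allI impI ballI)
    fix r R :: real and x0 assume rR: "0 < r \<and> r \<le> R \<and> R < 1" and x0: "x0 \<in> K"
    define F where "F = cball x0 R \<inter> K"
    have cF: "compact F" unfolding F_def using cK by (intro closed_Int_compact) auto
    have x0F: "x0 \<in> F" using x0 rR by (simp add: F_def)
    have cov1: "1 \<le> covnum r F"
      using covnum_lower[OF cF, of r "{x0}"] rR x0F by simp
    have "\<exists>n. \<rho> ^ n < R / (2 * D)" using rR D r1 by (intro real_arch_pow_inv) auto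
    then have exm: "\<exists>n. 2 * D * \<rho> ^ n \<le> R" using D by (auto simp: field_simps intro: less_imp_le)
    define m where "m = (LEAST n. 2 * D * \<rho> ^ n \<le> R)"
    have m1: "2 * D * \<rho> ^ m \<le> R" unfolding m_def by (rule LeastI_ex[OF exm])
    have m2: "\<rho> ^ m \<ge> \<alpha> * R"
    proof (cases m)
      case 0
      then show ?thesis using \<alpha>1 r1 rR by (simp add: mult_le_one less_imp_le)
    next
      case (Suc m')
      then have "\<not> 2 * D * \<rho> ^ m' \<le> R" unfolding m_def by (metis Suc lessI m_def not_less_Least)
      then have "\<rho> ^ m' > R / (2 * D)" using D by (simp add: field_simps)
      then have "\<rho> * (R / (2 * D)) \<le> \<rho> * \<rho> ^ m'" using r0 by (intro mult_left_mono) auto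
      then have "\<rho> ^ m \<ge> \<rho> * (R / (2 * D))" using Suc by simp
      moreover have "\<alpha> * R \<le> \<rho> * (R / (2 * D))"
      proof -
        have "min 1 (1 / (2 * D)) * R \<le> (1 / (2 * D)) * R" using rR by (intro mult_right_mono) auto
        then have "\<rho> * (min 1 (1 / (2 * D)) * R) \<le> \<rho> * ((1 / (2 * D)) * R)" using r0 by (intro mult_left_mono) auto
        then show ?thesis unfolding \<alpha>_def by (simp add: mult.assoc)
      qed
      ultimately show ?thesis by linarith
    qed
    obtain i where i: "i \<in> N m" "x0 \<in> Q m i" using P3a[of m] x0 by blast
    obtain a where a: "a \<in> T" "length a = m" "lab a = i" using lab_surj[OF i(1)] by blast
    have QF: "Q m (lab a) \<subseteq> F"
    proof
      fix z assume z: "z \<in> Q m (lab a)"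
      have sub: "Q m i \<subseteq> cball (x m i) (D * \<rho> ^ m)" using cD i(1) by blast
      have d1: "dist (x m i) z \<le> D * \<rho> ^ m" using sub z a(3) by auto
      have d2: "dist (x m i) x0 \<le> D * \<rho> ^ m" using sub i(2) by auto
      have "dist x0 z \<le> 2 * D * \<rho> ^ m" using d1 d2 dist_triangle2[of x0 z "x m i"] by (simp add: dist_commute)
      then show "z \<in> F" using m1 z QK[OF i(1)] a(3) by (auto simp: F_def)
    qed
    show "C0 * (R / r) powr s \<le> real (covnum r (cball x0 R \<inter> K))"
    proof (cases "2 * r \<le> c * \<rho> ^ m")
      case False
      then have "c * (\<alpha> * R) < 2 * r" using m2 c by (smt (verit) mult_left_mono)
      moreover have "c * (\<alpha> * R) * \<rho> \<le> c * (\<alpha> * R)"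
        using rR r0 r1 c \<alpha>0 by (intro mult_left_le) auto
      ultimately have h: "c * (\<alpha> * R) * \<rho> \<le> 2 * r" by linarith
      have "\<gamma> * (R / r) = c * (\<alpha> * R) * \<rho> / (2 * r)" unfolding \<gamma>_def by (simp add: field_simps)
      also have "\<dots> \<le> 1" using h rR by (simp add: divide_le_eq)
      finally have "\<gamma> * (R / r) \<le> 1" .
      then have "(\<gamma> * (R / r)) powr s \<le> 1" using \<gamma>0 rR s by (intro powr_le1) auto
      moreover have "(\<gamma> * (R / r)) powr s = \<gamma> powr s * (R / r) powr s"
        by (rule powr_mult)
      ultimately have g1: "\<gamma> powr s * (R / r) powr s \<le> 1" by simp
      have "C0 * (R / r) powr s = min Ct 1 * (\<gamma> powr s * (R / r) powr s)" by (simp add: C0_def)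
      also have "\<dots> \<le> 1" by (rule mult_le_one) (use g1 in auto)
      finally have "C0 * (R / r) powr s \<le> 1" .
      then show ?thesis using cov1 by (simp add: F_def)
    next
      case True
      have "\<exists>n. \<rho> ^ n < 2 * r / c" using rR c r1 by (intro real_arch_pow_inv) auto
      then obtain n where n: "\<rho> ^ n < 2 * r / c" by blast
      have exk: "\<exists>k. m \<le> k \<and> c * \<rho> ^ Suc k < 2 * r"
      proof (intro exI conjI)
        show "m \<le> n + m" by simp
        have "\<rho> ^ Suc (n + m) \<le> \<rho> ^ n" using r0 r1 by (intro power_decreasing) auto
        then have "c * \<rho> ^ Suc (n + m) \<le> c * \<rho> ^ n" using c by (intro mult_left_mono) auto
        moreover have "c * \<rho> ^ n < 2 * r" using n c by (simp add: pos_less_divide_eq mult.commute)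
        ultimately show "c * \<rho> ^ Suc (n + m) < 2 * r" by linarith
      qed
      define k where "k = (LEAST k. m \<le> k \<and> c * \<rho> ^ Suc k < 2 * r)"
      have k1: "m \<le> k" "c * \<rho> ^ Suc k < 2 * r" using LeastI_ex[OF exk] unfolding k_def by auto
      have k2: "2 * r \<le> c * \<rho> ^ k"
      proof (cases "k = m")
        case True then show ?thesis using \<open>2 * r \<le> c * \<rho> ^ m\<close> by simp
      next
        case False
        then obtain k' where k': "k = Suc k'" "m \<le> k'" using k1(1)
          by (metis le_SucE le_antisym not0_implies_Suc not_less_eq_eq zero_le)
        then have "\<not> (m \<le> k' \<and> c * \<rho> ^ Suc k' < 2 * r)" unfolding k_def
          by (metis k_def lessI not_less_Least)
        then show ?thesis using k' by simp
      qed
      define B where "B = {b\<in>T. length b = k \<and> cyl b \<subseteq> cyl a}"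
      have HB: "real (card B) \<ge> Ct * \<rho> powr ((real m - real k) * s)"
        using H k1(1) a unfolding B_def by blast
      have "Ct * \<rho> powr ((real m - real k) * s) > 0" using Ct r0 by simp
      then have "card B > 0" using HB by linarith
      then have finB: "finite B" by (rule card_ge_0_finite)
      have cardB: "card B \<le> covnum r F"
        using count_bound[OF cb a(1) a(2) k1(1) QF cF _ k2] finB rR unfolding B_def by blast
      have pk: "\<rho> ^ k < 2 * r / (c * \<rho>)" using k1(2) c r0 by (simp add: field_simps)
      have pkpos: "\<rho> ^ k > 0" using r0 by simp
      have "\<rho> powr (real m - real k) = \<rho> ^ m / \<rho> ^ k"
        using r0 by (simp add: powr_diff powr_realpow)
      also have "\<dots> \<ge> (\<alpha> * R) / (2 * r / (c * \<rho>))"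
        using m2 pk pkpos \<alpha>0 rR r0 by (intro frac_le) auto
      finally have "\<rho> powr (real m - real k) \<ge> \<gamma> * (R / r)"
        unfolding \<gamma>_def using c r0 rR by (simp add: field_simps)
      then have "(\<gamma> * (R / r)) powr s \<le> (\<rho> powr (real m - real k)) powr s"
        using \<gamma>0 rR s by (intro powr_mono2) auto
      also have "\<dots> = \<rho> powr ((real m - real k) * s)" by (simp add: powr_powr)
      finally have est: "\<gamma> powr s * (R / r) powr s \<le> \<rho> powr ((real m - real k) * s)"
        by (simp only: powr_mult)
      have "C0 * (R / r) powr s = min Ct 1 * (\<gamma> powr s * (R / r) powr s)" by (simp add: C0_def)
      also have "\<dots> \<le> Ct * \<rho> powr ((real m - real k) * s)"
        using est Ct by (intro mult_mono) auto
      also have "\<dots> \<le> real (card B)" by (rule HB)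
      also have "\<dots> \<le> real (covnum r F)" using cardB by simp
      finally show ?thesis by (simp add: F_def)
    qed
  qed
qed

end


theorem lemma3p5:
  fixes K :: "'a::euclidean_space set" and \<rho> :: real
    and N :: "nat \<Rightarrow> 'i set" and Q :: "nat \<Rightarrow> 'i \<Rightarrow> 'a set" and x :: "nat \<Rightarrow> 'i \<Rightarrow> 'a"
    and T :: "nat list set" and lab :: "nat list \<Rightarrow> 'i"
  assumes "compact K" and "K \<noteq> {}"
    and "0 < \<rho>" and "\<rho> < 1"
    and "inner_regular_partition K \<rho> N Q x"
    and "corresponding_tree N Q T lab"
  shows "lower_dim_tree \<rho> T \<le> lower_dim K"
proof -
  interpret irp K \<rho> N Q x T lab using assms(5,6) by unfold_locales
  show ?thesis
    unfolding lower_dim_tree_def lower_dim_def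
  proof (rule cSup_subset_mono)
    show "insert 0 {s. s > 0 \<and> (\<exists>C>0. \<forall>m k. m \<le> k \<longrightarrow>
       (\<forall>a\<in>T. length a = m \<longrightarrow>
          real (card {b\<in>T. length b = k \<and> cyl b \<subseteq> cyl a}) \<ge> C * \<rho> powr ((real m - real k) * s)))} \<noteq> {}"
      by simp
    show "bdd_above (insert 0 {s. s > 0 \<and> (\<exists>C>0. \<forall>r R. 0 < r \<and> r \<le> R \<and> R < 1 \<longrightarrow>
       (\<forall>x\<in>K. real (covnum r (cball x R \<inter> K)) \<ge> C * (R / r) powr s))})"
      by (rule bdd_aboveI[where M = "real DIM('a)"]) (use KS_bounded[OF assms(2)] in auto)
    show "insert 0 {s. s > 0 \<and> (\<exists>C>0. \<forall>m k. m \<le> k \<longrightarrow>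
       (\<forall>a\<in>T. length a = m \<longrightarrow>
          real (card {b\<in>T. length b = k \<and> cyl b \<subseteq> cyl a}) \<ge> C * \<rho> powr ((real m - real k) * s)))}
      \<subseteq> insert 0 {s. s > 0 \<and> (\<exists>C>0. \<forall>r R. 0 < r \<and> r \<le> R \<and> R < 1 \<longrightarrow>
       (\<forall>x\<in>K. real (covnum r (cball x R \<inter> K)) \<ge> C * (R / r) powr s))}"
      using tree_to_K[OF assms(1,3,4)] by blast
  qed
qed

end
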